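(* Let $v_1,\dots,v_N\in S^{n-1}$ ($N\ge 2$) be in general position in dimension $n$. There exists a constant $c_0>0$ depending only on $n$ and $v_1,\dots,v_N$ such that the following holds: for any $1\le i_1<i_2\le N$, any $R>0$, and any two $(n-1)$-dimensional Euclidean balls $B_1^{n-1},B_2^{n-1}$ of radius $R$ with $B_1^{n-1}$ lying in a hyperplane orthogonal to $v_{i_1}$ and $B_2^{n-1}$ lying in a hyperplane orthogonal to $v_{i_2}$, the set $K=\mathrm{conv}\{B_1^{n-1},B_2^{n-1}\}$ contains a ball $B(x_0,c_0R)$ for some $x_0\in\mathrm{int}\,K$.
   Context: Unit vectors $v_1,\dots,v_N\in\mathbb R^n$ are in general position in dimension $n$ if any $n$ of them are linearly independent (in particular no two are parallel). $B(x,r)$ denotes the closed Euclidean ball in $\mathbb R^n$ with center $x$ and radius $r$. *)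

theory Defs
  imports "HOL-Analysis.Analysis"
begin

definition general_position :: "(nat \<Rightarrow> 'a::euclidean_space) \<Rightarrow> nat \<Rightarrow> bool" where
  "general_position v N \<longleftrightarrow>
     (\<forall>I. I \<subseteq> {1..N} \<and> card I \<le> DIM('a) \<longrightarrow> inj_on v I \<and> independent (v ` I)) \<and>
     (\<forall>i\<in>{1..N}. \<forall>j\<in>{1..N}. i \<noteq> j \<longrightarrow> independent {v i, v j} \<and> v i \<noteq> v j)"

definition hyperplane_ball :: "'a::euclidean_space \<Rightarrow> 'a \<Rightarrow> real \<Rightarrow> 'a set" where
  "hyperplane_ball w c R = {x \<in> cball c R. w \<bullet> (x - c) = 0}"

end

theory Submission
  imports Defs
begin

lemma key_ball:
  fixes v1 v2 c1 c2 :: "'a::euclidean_space"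
  assumes n1: "norm v1 = 1" and n2: "norm v2 = 1"
    and dpos: "1 - (v1 \<bullet> v2)^2 > 0"
    and c: "0 < c" "c \<le> (1 - (v1 \<bullet> v2)^2) / 4" and R: "R > 0"
  shows "cball ((c1 + c2) /\<^sub>R 2) (c * R) \<subseteq>
     convex hull (hyperplane_ball v1 c1 R \<union> hyperplane_ball v2 c2 R)"
proof
  fix x assume x: "x \<in> cball ((c1 + c2) /\<^sub>R 2) (c * R)"
  define k where "k = v1 \<bullet> v2"
  define d where "d = 1 - k^2"
  have d0: "d > 0" using dpos by (simp add: d_def k_def)
  have d1: "d \<le> 1" by (simp add: d_def)
  define z where "z = 2 *\<^sub>R (x - (c1 + c2) /\<^sub>R 2)"
  have nz: "norm z \<le> 2 * c * R" using x
    by (simp add: z_def dist_norm norm_minus_commute)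
  define e where "e = v1 - k *\<^sub>R v2"
  define s where "s = (z \<bullet> v1) / d"
  define b where "b = s *\<^sub>R e"
  define a where "a = z - b"
  have v11: "v1 \<bullet> v1 = 1" using n1 by (simp add: dot_square_norm)
  have v22: "v2 \<bullet> v2 = 1" using n2 by (simp add: dot_square_norm)
  have ev1: "e \<bullet> v1 = d"
    by (simp add: e_def d_def inner_diff_left inner_diff_right v11 k_def inner_commute power2_eq_square)
  have ev2: "e \<bullet> v2 = 0"
    by (simp add: e_def inner_diff_left v22 k_def)
  have ee: "e \<bullet> e = d"
    by (simp add: e_def inner_diff_left inner_diff_right v11 v22 k_def d_def inner_commute power2_eq_square)
  have av1: "v1 \<bullet> a = 0"
    using d0 by (simp add: a_def b_def s_def inner_diff_right inner_commute ev1)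
  have bv2: "v2 \<bullet> b = 0"
    by (simp add: b_def inner_commute ev2)
  have "(norm b)^2 = b \<bullet> b" by (simp add: power2_norm_eq_inner)
  also have "\<dots> = s * s * (e \<bullet> e)" by (simp add: b_def)
  also have "\<dots> = (z \<bullet> v1)^2 / d" using d0 by (simp add: ee s_def power2_eq_square)
  finally have nb2: "(norm b)^2 = (z \<bullet> v1)^2 / d" .
  have "(z \<bullet> v1)^2 \<le> (norm z)^2"
  proof -
    have "\<bar>z \<bullet> v1\<bar> \<le> norm z * norm v1" by (rule Cauchy_Schwarz_ineq2)
    then show ?thesis using n1 by (metis abs_ge_zero mult.right_neutral power2_abs power_mono)
  qed
  hence "(norm b)^2 \<le> (norm z)^2 / d" using nb2 d0 by (simp add: divide_right_mono)
  also have "\<dots> \<le> (norm z)^2 / d^2"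
    using d0 d1 by (simp add: frac_le power2_eq_square mult_le_cancel_left1)
  also have "\<dots> = (norm z / d)^2" by (simp add: power_divide)
  finally have nb: "norm b \<le> norm z / d"
    using d0 by (meson divide_nonneg_pos norm_ge_zero power2_le_imp_le)
  have na: "norm a \<le> norm z + norm z / d"
    using nb norm_triangle_ineq4[of z b] by (simp add: a_def)
  have "norm z \<le> norm z / d" using d0 d1
    by (simp add: le_divide_eq mult_left_le)
  hence na2: "norm a \<le> 2 * norm z / d" using na by simp
  have nzd: "2 * norm z / d \<le> R"
  proof -
    have "2 * norm z \<le> 4 * c * R" using nz by linarith
    also have "\<dots> \<le> d * R" using c R by (simp add: d_def k_def)
    finally show ?thesis using d0 by (simp add: divide_le_eq mult.commute)
  qed
  have nb3: "norm b \<le> R" using nb nzd d0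
    by (smt (verit) divide_right_mono norm_ge_zero)
  have P1: "c1 + a \<in> hyperplane_ball v1 c1 R"
    using av1 na2 nzd by (simp add: hyperplane_ball_def dist_norm)
  have P2: "c2 + b \<in> hyperplane_ball v2 c2 R"
    using bv2 nb3 by (simp add: hyperplane_ball_def dist_norm)
  have xeq: "x = (1 - 1/2) *\<^sub>R (c1 + a) + (1/2) *\<^sub>R (c2 + b)"
    by (simp add: a_def z_def algebra_simps)
  show "x \<in> convex hull (hyperplane_ball v1 c1 R \<union> hyperplane_ball v2 c2 R)"
  proof -
    let ?H = "convex hull (hyperplane_ball v1 c1 R \<union> hyperplane_ball v2 c2 R)"
    have A: "c1 + a \<in> ?H" using P1 by (meson UnI1 hull_inc)
    have B: "c2 + b \<in> ?H" using P2 by (meson UnI2 hull_inc)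
    have "(1 - 1/2) *\<^sub>R (c1 + a) + (1/2) *\<^sub>R (c2 + b) \<in> ?H"
      by (rule convexD_alt[OF convex_convex_hull A B]) simp_all
    thus ?thesis using xeq by simp
  qed
qed

theorem lemma3p3:
  fixes v :: "nat \<Rightarrow> 'a::euclidean_space" and N :: nat
  assumes "N \<ge> 2"
    and "\<forall>i\<in>{1..N}. norm (v i) = 1"
    and "general_position v N"
  shows "\<exists>c0>0. \<forall>i1 i2 R c1 c2.
           1 \<le> i1 \<and> i1 < i2 \<and> i2 \<le> N \<and> R > 0 \<longrightarrow>
           (\<exists>x0 \<in> interior (convex hull (hyperplane_ball (v i1) c1 R \<union> hyperplane_ball (v i2) c2 R)).
              cball x0 (c0 * R) \<subseteq> convex hull (hyperplane_ball (v i1) c1 R \<union> hyperplane_ball (v i2) c2 R))"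
proof -
  define P where "P = {(i,j). 1 \<le> i \<and> i < j \<and> j \<le> (N::nat)}"
  define f where "f = (\<lambda>(i,j). (1 - (v i \<bullet> v j)^2) / 4)"
  define c0 where "c0 = Min (f ` P)"
  have finP: "finite P"
    by (rule finite_subset[of _ "{1..N} \<times> {1..N}"]) (auto simp: P_def)
  have "(1,2) \<in> P" using assms(1) by (simp add: P_def)
  hence neP: "P \<noteq> {}" by blast
  have dpos: "1 - (v i \<bullet> v j)^2 > 0" if ij: "(i,j) \<in> P" for i j
  proof (rule ccontr)
    assume neg: "\<not> ?thesis"
    define k where "k = v i \<bullet> v j"
    have ui: "norm (v i) = 1" and uj: "norm (v j) = 1" using ij assms(2) by (auto simp: P_def)
    have ii: "v i \<bullet> v i = 1" using ui by (simp add: dot_square_norm)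
    have jj: "v j \<bullet> v j = 1" using uj by (simp add: dot_square_norm)
    have "norm (v i - k *\<^sub>R v j)^2 = (v i - k *\<^sub>R v j) \<bullet> (v i - k *\<^sub>R v j)"
      by (simp add: power2_norm_eq_inner)
    also have "\<dots> = 1 - k^2"
      by (simp add: inner_diff_left inner_diff_right ii jj k_def inner_commute power2_eq_square)
    finally have "norm (v i - k *\<^sub>R v j)^2 = 1 - k^2" .
    hence "norm (v i - k *\<^sub>R v j)^2 \<le> 0" using neg k_def by simp
    hence "v i = k *\<^sub>R v j" by simp
    hence "v i \<in> span {v j}" by (simp add: span_base span_mul)
    moreover have "independent {v i, v j}" "v i \<noteq> v j"
      using assms(3) ij unfolding general_position_def P_def by auto
    ultimately show False using independent_insert by (metis empty_iff insert_iff)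
  qed
  have c0pos: "c0 > 0"
    unfolding c0_def using finP neP dpos by (auto simp: Min_gr_iff f_def)
  show ?thesis
  proof (intro exI[of _ c0] conjI c0pos allI impI)
    fix i1 i2 :: nat and R :: real and c1 c2 :: 'a
    assume h: "1 \<le> i1 \<and> i1 < i2 \<and> i2 \<le> N \<and> R > 0"
    hence inP: "(i1,i2) \<in> P" by (simp add: P_def)
    have cle: "c0 \<le> (1 - (v i1 \<bullet> v i2)^2) / 4"
    proof -
      have "f (i1,i2) \<in> f ` P" using inP by blast
      hence "Min (f ` P) \<le> f (i1,i2)" using finP by simp
      thus ?thesis by (simp add: c0_def f_def)
    qed
    have sub: "cball ((c1 + c2) /\<^sub>R 2) (c0 * R) \<subseteq>
       convex hull (hyperplane_ball (v i1) c1 R \<union> hyperplane_ball (v i2) c2 R)"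
      using key_ball[of "v i1" "v i2" c0 R c1 c2] assms(2) h dpos[OF inP] c0pos cle by auto
    have "(c1 + c2) /\<^sub>R 2 \<in> interior (convex hull (hyperplane_ball (v i1) c1 R \<union> hyperplane_ball (v i2) c2 R))"
      using sub c0pos h by (meson ball_subset_cball mem_interior subset_trans mult_pos_pos)
    with sub show "\<exists>x0 \<in> interior (convex hull (hyperplane_ball (v i1) c1 R \<union> hyperplane_ball (v i2) c2 R)).
              cball x0 (c0 * R) \<subseteq> convex hull (hyperplane_ball (v i1) c1 R \<union> hyperplane_ball (v i2) c2 R)"
      by blast
  qed
qed

end
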